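(* Let $N = n+1 \geq 4$ be even and let $\boldsymbol{\lambda} = (\lambda_1,\dots,\lambda_N) \in \Lambda_N$. Let $V_N = \{\mathbf{v}_0,\dots,\mathbf{v}_N\} \subset \mathbb{R}^n$ with $\mathbf{v}_0 = \mathbf{0}$ and $\mathbf{v}_i = \lambda_i(\mathbf{e}_{i-1} - \mathbf{e}_i)$ for $1 \le i \le N$, and let $G^{\mathbf{0}}_{\boldsymbol{\lambda}} = \operatorname{conv} V_N$. Then $G^{\mathbf{0}}_{\boldsymbol{\lambda}}$ has exactly two triangulations (with vertices among $V_N$), namely \[ \Delta_+(G^{\mathbf{0}}_{\boldsymbol{\lambda}}) = \{\operatorname{conv}(V_N \setminus \{\mathbf{v}_i\}) \mid 1\le i\le N,\ \lambda_i = \lambda_1\} \] and \[ \Delta_-(G^{\mathbf{0}}_{\boldsymbol{\lambda}}) = \{\operatorname{conv}(V_N \setminus \{\mathbf{v}_i\}) \mid 1\le i\le N,\ \lambda_i = -\lambda_1\}. \] Moreover, both of these triangulations are regular.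
   Context: $\mathbf{e}_1,\dots,\mathbf{e}_n$ is the standard basis of $\mathbb{R}^n$, and by convention $\mathbf{e}_0 = \mathbf{e}_{n+1} = \mathbf{e}_N = \mathbf{0}$. For even $N$, $\Lambda_N = \{(\lambda_1,\dots,\lambda_N) \in \{-1,1\}^N \mid \sum_{i=1}^N \lambda_i = 0\}$. A triangulation of a polytope is a subdivision into simplices; it is regular if it is the projection to $\mathbb{R}^n$ of the lower facets (facets whose inner normal has positive last coordinate) of the lifted polytope $\operatorname{conv}\{(\mathbf{v}, h(\mathbf{v}))\}$ for some height function $h$ on the vertices. *)

theory Defs
  imports "HOL-Analysis.Analysis"
begin

definition Lambda :: "nat \<Rightarrow> (nat \<Rightarrow> real) set" where
  "Lambda N = {lam. (\<forall>i\<in>{1..N}. lam i \<in> {-1, 1}) \<and> (\<Sum>i=1..N. lam i) = 0}"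

text \<open>Standard basis e_1..e_n of real^'n, where the coordinates of 'n are
  enumerated by the bijection idx : {1..n} -> UNIV; e_i = 0 for i outside 1..n
  (so e_0 = e_{n+1} = e_N = 0).\<close>
definition ebasis :: "(nat \<Rightarrow> 'n::finite) \<Rightarrow> nat \<Rightarrow> nat \<Rightarrow> real ^ 'n" where
  "ebasis idx n i = (if 1 \<le> i \<and> i \<le> n then axis (idx i) 1 else 0)"

definition vpt :: "(nat \<Rightarrow> 'n::finite) \<Rightarrow> nat \<Rightarrow> (nat \<Rightarrow> real) \<Rightarrow> nat \<Rightarrow> real ^ 'n" where
  "vpt idx n lam i = (if i = 0 then 0 else lam i *\<^sub>R (ebasis idx n (i - 1) - ebasis idx n i))"

definition triangulation :: "'a::euclidean_space set \<Rightarrow> 'a set set \<Rightarrow> bool" where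
  "triangulation A T \<longleftrightarrow> finite T \<and>
     (\<forall>S\<in>T. \<exists>B. B \<subseteq> A \<and> \<not> affine_dependent B \<and>
                 int (card B) = aff_dim (convex hull A) + 1 \<and> S = convex hull B) \<and>
     \<Union>T = convex hull A \<and>
     (\<forall>S\<in>T. \<forall>S'\<in>T. (S \<inter> S') face_of S \<and> (S \<inter> S') face_of S')"

definition lower_facet :: "('a::euclidean_space \<times> real) set \<Rightarrow> ('a \<times> real) set \<Rightarrow> bool" where
  "lower_facet P F \<longleftrightarrow> F face_of P \<and> aff_dim F = aff_dim P - 1 \<and>
     (\<exists>a c b. c > 0 \<and> (\<forall>x\<in>P. inner (a, c) x \<ge> b) \<and> F = {x\<in>P. inner (a, c) x = b})"

definition regular_triangulation :: "'a::euclidean_space set \<Rightarrow> 'a set set \<Rightarrow> bool" where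
  "regular_triangulation A T \<longleftrightarrow> triangulation A T \<and>
     (\<exists>h :: 'a \<Rightarrow> real.
        T = (\<lambda>F. fst ` F) ` {F. lower_facet (convex hull ((\<lambda>v. (v, h v)) ` A)) F})"

end

theory Submission
  imports Defs
begin

lemma affdep_image:
  fixes f :: "'i \<Rightarrow> 'a::real_vector"
  assumes "finite I" "inj_on f I"
  shows "affine_dependent (f ` I) \<longleftrightarrow> (\<exists>d. sum d I = 0 \<and> (\<exists>i\<in>I. d i \<noteq> 0) \<and> (\<Sum>i\<in>I. d i *\<^sub>R f i) = 0)"
proof -
  have fin: "finite (f ` I)" using assms by simp
  show ?thesis
  proof
    assume "affine_dependent (f ` I)"
    then obtain U where U: "sum U (f ` I) = 0" "\<exists>x\<in>f ` I. U x \<noteq> 0" "(\<Sum>x\<in>f ` I. U x *\<^sub>R x) = 0"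
      using affine_dependent_explicit_finite[OF fin] by blast
    show "\<exists>d. sum d I = 0 \<and> (\<exists>i\<in>I. d i \<noteq> 0) \<and> (\<Sum>i\<in>I. d i *\<^sub>R f i) = 0"
      apply (rule exI[of _ "\<lambda>i. U (f i)"])
      using U by (auto simp: sum.reindex[OF assms(2)])
  next
    assume "\<exists>d. sum d I = 0 \<and> (\<exists>i\<in>I. d i \<noteq> 0) \<and> (\<Sum>i\<in>I. d i *\<^sub>R f i) = 0"
    then obtain d where d: "sum d I = 0" "\<exists>i\<in>I. d i \<noteq> 0" "(\<Sum>i\<in>I. d i *\<^sub>R f i) = 0" by blast
    define U where "U y = d (inv_into I f y)" for y
    have Uf: "U (f i) = d i" if "i \<in> I" for i using inv_into_f_f[OF assms(2) that] by (simp add: U_def)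
    have "sum U (f ` I) = 0" "(\<Sum>x\<in>f ` I. U x *\<^sub>R x) = 0" "\<exists>x\<in>f ` I. U x \<noteq> 0"
      using d Uf by (auto simp: sum.reindex[OF assms(2)])
    then show "affine_dependent (f ` I)"
      using affine_dependent_explicit_finite[OF fin] by blast
  qed
qed

lemma hull_ge:
  fixes L :: "'a::real_inner set"
  assumes "\<forall>l\<in>L. b \<le> inner w l"
  shows "\<forall>x\<in>convex hull L. b \<le> inner w x"
proof -
  have "convex hull L \<subseteq> {x. inner w x \<ge> b}"
    using assms by (intro hull_minimal) (auto simp: convex_halfspace_ge)
  then show ?thesis by auto
qed

lemma hull_section:
  fixes L :: "'a::real_inner set"
  assumes fin: "finite L" and ge: "\<forall>l\<in>L. b \<le> inner w l"
  shows "{x \<in> convex hull L. inner w x = b} = convex hull {l\<in>L. inner w l = b}"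
proof (rule equalityI)
  let ?LF = "{l\<in>L. inner w l = b}"
  show "convex hull ?LF \<subseteq> {x \<in> convex hull L. inner w x = b}"
  proof -
    have "convex hull ?LF \<subseteq> convex hull L" by (rule hull_mono) auto
    moreover have "convex hull ?LF \<subseteq> {x. inner w x = b}"
      by (intro hull_minimal) (auto simp: convex_hyperplane)
    ultimately show ?thesis by blast
  qed
  show "{x \<in> convex hull L. inner w x = b} \<subseteq> convex hull ?LF"
  proof
    fix x assume x: "x \<in> {x \<in> convex hull L. inner w x = b}"
    then obtain u where u: "\<forall>l\<in>L. 0 \<le> u l" "sum u L = 1" "(\<Sum>l\<in>L. u l *\<^sub>R l) = x"
      using convex_hull_finite[OF fin] by auto
    have "inner w x = (\<Sum>l\<in>L. u l * inner w l)"
      using u(3) by (auto simp: inner_sum_right)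
    moreover have "(\<Sum>l\<in>L. u l * (inner w l - b)) = (\<Sum>l\<in>L. u l * inner w l) - (\<Sum>l\<in>L. u l) * b"
      by (simp add: right_diff_distrib sum_subtractf sum_distrib_right)
    ultimately have s0: "(\<Sum>l\<in>L. u l * (inner w l - b)) = 0"
      using x u(2) by simp
    have nn: "0 \<le> u l * (inner w l - b)" if "l \<in> L" for l
      using that u(1) ge by (meson diff_ge_0_iff_ge mult_nonneg_nonneg)
    have z: "\<forall>l\<in>L. u l * (inner w l - b) = 0"
      using iffD1[OF sum_nonneg_eq_0_iff[OF fin nn] s0] .
    have z2: "\<forall>l\<in>L - ?LF. u l = 0" using z by auto
    have finF: "finite ?LF" using fin by simp
    have "sum u ?LF = sum u L"
      by (rule sum.mono_neutral_left) (use fin z2 in auto)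
    moreover have "(\<Sum>l\<in>?LF. u l *\<^sub>R l) = (\<Sum>l\<in>L. u l *\<^sub>R l)"
      by (rule sum.mono_neutral_left) (use fin z2 in auto)
    ultimately show "x \<in> convex hull ?LF"
      unfolding convex_hull_finite[OF finF] using u by auto
  qed
qed

locale gcfg =
  fixes idx :: "nat \<Rightarrow> 'n::finite" and N :: nat and lam :: "nat \<Rightarrow> real"
  assumes evenN: "even N" and N4: "N \<ge> 4" and cardn: "CARD('n) + 1 = N"
    and bij: "bij_betw idx {1..N - 1} (UNIV :: 'n set)" and lamL: "lam \<in> Lambda N"
begin

definition v :: "nat \<Rightarrow> real^'n" where "v i = vpt idx (N - 1) lam i"
definition lz :: "nat \<Rightarrow> real" where "lz i = (if i = 0 then 0 else lam i)"

lemma lam_pm: "i \<in> {1..N} \<Longrightarrow> lam i = 1 \<or> lam i = -1"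
  using lamL unfolding Lambda_def by auto

lemma lam_sq: "i \<in> {1..N} \<Longrightarrow> lam i * lam i = 1"
  using lam_pm by fastforce

lemma sum_lam: "(\<Sum>i=1..N. lam i) = 0"
  using lamL unfolding Lambda_def by auto

lemma sum_lz: "sum lz {0..N} = 0"
proof -
  have "sum lz {0..N} = lz 0 + sum lz {1..N}"
    by (simp add: sum.atLeast_Suc_atMost)
  also have "sum lz {1..N} = (\<Sum>i=1..N. lam i)"
    by (rule sum.cong) (auto simp: lz_def)
  finally show ?thesis using sum_lam by (simp add: lz_def)
qed

lemma inj_idx: "inj_on idx {1..N-1}"
  using bij bij_betw_imp_inj_on by blast

lemma surj_idx: "idx ` {1..N-1} = UNIV"
  using bij bij_betw_imp_surj_on by blast

lemma ebasis_comp: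
  assumes "k \<in> {1..N-1}"
  shows "ebasis idx (N-1) m $ idx k = (if m = k then 1 else 0)"
proof (cases "1 \<le> m \<and> m \<le> N - 1")
  case True
  then have "idx m = idx k \<longleftrightarrow> m = k"
    using inj_idx assms by (auto dest: inj_onD)
  then show ?thesis using True by (auto simp: ebasis_def axis_def)
next
  case False
  then show ?thesis using assms by (auto simp: ebasis_def)
qed

lemma v_comp:
  assumes "k \<in> {1..N-1}"
  shows "v i $ idx k = (if i = k+1 then lam i else if i = k then - lam i else 0)"
proof -
  have e: "\<And>m. ebasis idx (N-1) m $ idx k = (if m = k then 1 else 0)"
    using ebasis_comp[OF assms] .
  have h: "v i $ idx k = (if i = 0 then 0 else lam i * (ebasis idx (N-1) (i-1) $ idx k - ebasis idx (N-1) i $ idx k))"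
    by (simp add: v_def vpt_def)
  show ?thesis
  proof (cases "i = 0")
    case True then show ?thesis unfolding h using assms by simp
  next
    case False
    then have "i - 1 = k \<longleftrightarrow> i = k + 1" by arith
    then show ?thesis unfolding h e using False by simp
  qed
qed

lemma comb_comp:
  assumes "k \<in> {1..N-1}"
  shows "(\<Sum>i=0..N. d i *\<^sub>R v i) $ idx k = lam (k+1) * d (k+1) - lam k * d k"
proof -
  have "(\<Sum>i=0..N. d i *\<^sub>R v i) $ idx k = (\<Sum>i=0..N. d i * (v i $ idx k))"
    by simp
  also have "\<dots> = (\<Sum>i=0..N. (if i = k+1 then d i * lam i else 0) + (if i = k then - (d i * lam i) else 0))"
    by (rule sum.cong) (auto simp: v_comp[OF assms])
  also have "\<dots> = lam (k+1) * d (k+1) - lam k * d k"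
  proof -
    have "k+1 \<le> N" "k \<le> N" using assms N4 by auto
    then show ?thesis by (simp add: sum.distrib)
  qed
  finally show ?thesis .
qed

lemma vec_eq0:
  assumes "\<And>k. k \<in> {1..N-1} \<Longrightarrow> x $ idx k = 0"
  shows "x = (0::real^'n)"
proof -
  have "x $ j = 0" for j
  proof -
    obtain k where "k \<in> {1..N-1}" "j = idx k" using surj_idx by (metis UNIV_I imageE)
    then show ?thesis using assms by auto
  qed
  then show ?thesis by (simp add: vec_eq_iff)
qed

lemma kernel:
  assumes "(\<Sum>i=0..N. d i *\<^sub>R v i) = 0" and "i \<in> {1..N}"
  shows "lam i * d i = lam 1 * d 1"
proof -
  have step: "lam (k+1) * d (k+1) = lam k * d k" if "k \<in> {1..N-1}" for k
    using comb_comp[OF that, of d] assms(1) by simp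
  have "1 \<le> i \<Longrightarrow> i \<le> N \<Longrightarrow> lam i * d i = lam 1 * d 1" for i
  proof (induction i)
    case 0 then show ?case by simp
  next
    case (Suc i)
    show ?case
    proof (cases "i = 0")
      case True then show ?thesis by simp
    next
      case False
      then have "i \<in> {1..N-1}" using Suc.prems by auto
      have h1: "lam i * d i = lam 1 * d 1" using Suc.IH Suc.prems False by simp
      have h2: "lam (Suc i) * d (Suc i) = lam i * d i" using step[OF \<open>i \<in> {1..N-1}\<close>] by simp
      show ?thesis by (rule trans[OF h2 h1])
    qed
  qed
  then show ?thesis using assms(2) by (meson atLeastAtMost_iff)
qed

lemma dep: "(\<Sum>i=0..N. lz i *\<^sub>R v i) = 0"
proof (rule vec_eq0)
  fix k assume k: "k \<in> {1..N-1}"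
  then have "k \<in> {1..N}" "k+1 \<in> {1..N}" using N4 by auto
  then have "lam (k+1) * lz (k+1) - lam k * lz k = 0"
    using lam_sq[of k] lam_sq[of "k+1"] by (simp add: lz_def)
  then show "(\<Sum>i=0..N. lz i *\<^sub>R v i) $ idx k = 0"
    using comb_comp[OF k, of lz] by simp
qed

lemma class_card:
  assumes "s = 1 \<or> s = -1"
  shows "card {i\<in>{1..N}. lam i = s} = N div 2"
proof -
  define P where "P = {i\<in>{1..N}. lam i = 1}"
  define M where "M = {i\<in>{1..N}. lam i = -1}"
  have un: "{1..N} = P \<union> M"
  proof (intro equalityI subsetI)
    fix x assume "x \<in> {1..N}"
    then show "x \<in> P \<union> M" using lam_pm[of x] by (auto simp: P_def M_def)
  qed (auto simp: P_def M_def)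
  have dis: "P \<inter> M = {}" by (auto simp: P_def M_def)
  have fin: "finite P" "finite M" by (auto simp: P_def M_def)
  have "card (P \<union> M) = N" by (simp only: un[symmetric]) simp
  then have "card P + card M = N" using card_Un_disjoint[OF fin dis] by simp
  moreover have "(\<Sum>i=1..N. lam i) = sum lam P + sum lam M"
    using sum.union_disjoint[OF fin dis, of lam] un by simp
  moreover have "sum lam P = real (card P)" by (simp add: P_def)
  moreover have "sum lam M = - real (card M)" by (simp add: M_def)
  ultimately have "card P = N div 2" "card M = N div 2" using sum_lam by linarith+
  then show ?thesis using assms by (auto simp: P_def M_def)
qed

lemma other_same:
  assumes "j \<in> {1..N}"
  shows "\<exists>i\<in>{1..N}. i \<noteq> j \<and> lam i = lam j"
proof -
  let ?C = "{i\<in>{1..N}. lam i = lam j}"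
  have "card ?C = N div 2" using class_card lam_pm[OF assms] by blast
  then have "card ?C \<ge> 2" using N4 by linarith
  then have "card (?C - {j}) \<ge> 1" using assms by (simp add: card_Diff_singleton_if)
  then obtain i where "i \<in> ?C - {j}" by (metis card.empty ex_in_conv not_one_le_zero)
  then show ?thesis by auto
qed

lemma kernel2:
  assumes "(\<Sum>i=0..N. \<mu> i *\<^sub>R v i) = (\<Sum>i=0..N. \<nu> i *\<^sub>R v i)"
    and "sum \<mu> {0..N} = sum \<nu> {0..N}"
  shows "\<exists>c. (\<forall>i\<in>{1..N}. \<nu> i = \<mu> i + c * lam i) \<and> \<nu> 0 = \<mu> 0"
proof -
  define d where "d i = \<nu> i - \<mu> i" for i
  have "(\<Sum>i=0..N. d i *\<^sub>R v i) = 0"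
    using assms(1) by (simp add: d_def scaleR_diff_left sum_subtractf)
  note k = kernel[OF this]
  define c where "c = lam 1 * d 1"
  have dl: "d i = c * lam i" if "i \<in> {1..N}" for i
  proof -
    have "lam i * (lam i * d i) = lam i * c" using k[OF that] by (simp add: c_def)
    then show ?thesis using lam_sq[OF that] by (simp add: algebra_simps)
  qed
  have "sum d {0..N} = 0" using assms(2) by (simp add: d_def sum_subtractf)
  moreover have "sum d {0..N} = d 0 + sum d {1..N}" by (simp add: sum.atLeast_Suc_atMost)
  moreover have "sum d {1..N} = c * (\<Sum>i=1..N. lam i)"
    by (simp add: sum_distrib_left dl)
  ultimately have "d 0 = 0" using sum_lam by simp
  show ?thesis
  proof (intro exI conjI ballI)
    fix i assume "i \<in> {1..N}"
    then show "\<nu> i = \<mu> i + c * lam i" using dl[of i] by (simp add: d_def)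
  next
    show "\<nu> 0 = \<mu> 0" using \<open>d 0 = 0\<close> by (simp add: d_def)
  qed
qed

definition delta :: "nat \<Rightarrow> nat \<Rightarrow> real" where "delta i m = (if m = i then 1 else 0)"

lemma delta_sum: "i \<le> N \<Longrightarrow> sum (delta i) {0..N} = 1"
  by (simp add: delta_def)

lemma delta_comb: "i \<le> N \<Longrightarrow> (\<Sum>m=0..N. delta i m *\<^sub>R v m) = v i"
proof -
  assume "i \<le> N"
  have eq: "(\<lambda>m. delta i m *\<^sub>R v m) = (\<lambda>m. if m = i then v i else 0)"
    by (auto simp: delta_def fun_eq_iff)
  show ?thesis unfolding eq using \<open>i \<le> N\<close> by simp
qed

lemma v_inj: "inj_on v {0..N}"
proof
  fix i k assume i: "i \<in> {0..N}" and k: "k \<in> {0..N}" and e: "v i = v k"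
  show "i = k"
  proof (rule ccontr)
    assume ne: "i \<noteq> k"
    obtain c where c: "\<forall>m\<in>{1..N}. delta k m = delta i m + c * lam m" "delta k 0 = delta i 0"
      using kernel2[of "delta i" "delta k"] delta_comb delta_sum i k e by auto
    have "i \<noteq> 0" "k \<noteq> 0" using c(2) ne by (auto simp: delta_def split: if_splits)
    obtain m where m: "m \<in> {1..N}" "m \<noteq> i" "m \<noteq> k"
    proof -
      have "\<exists>m\<in>{1,2,3::nat}. m \<noteq> i \<and> m \<noteq> k" by auto
      then show ?thesis using that N4 by force
    qed
    have "delta k m = delta i m + c * lam m" using c(1) m(1) by blast
    then have "c * lam m = 0" using m by (simp add: delta_def)
    then have "c = 0" using lam_pm[OF m(1)] by auto
    have "i \<in> {1..N}" using \<open>i \<noteq> 0\<close> i by auto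
    then have "delta k i = delta i i + c * lam i" using c(1) by blast
    then show False using ne \<open>c = 0\<close> by (simp add: delta_def)
  qed
qed

definition rep :: "(nat \<Rightarrow> real) \<Rightarrow> real^'n \<Rightarrow> bool" where
  "rep \<mu> x \<longleftrightarrow> (\<forall>i\<in>{0..N}. 0 \<le> \<mu> i) \<and> sum \<mu> {0..N} = 1 \<and> (\<Sum>i=0..N. \<mu> i *\<^sub>R v i) = x"

lemma hull_rep:
  assumes I: "I \<subseteq> {0..N}"
  shows "x \<in> convex hull (v ` I) \<longleftrightarrow> (\<exists>\<mu>. rep \<mu> x \<and> (\<forall>i\<in>{0..N}-I. \<mu> i = 0))"
proof -
  have finI: "finite I" using I finite_subset by blast
  have inj: "inj_on v I" using v_inj I inj_on_subset by blast
  have hull: "convex hull (v ` I) = {y. \<exists>u. (\<forall>x\<in>v ` I. 0 \<le> u x) \<and> sum u (v ` I) = 1 \<and> (\<Sum>x\<in>v ` I. u x *\<^sub>R x) = y}"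
    using convex_hull_finite finI by blast
  show ?thesis
  proof
    assume "x \<in> convex hull (v ` I)"
    then obtain u where u: "\<forall>x\<in>v ` I. 0 \<le> u x" "sum u (v ` I) = 1" "(\<Sum>x\<in>v ` I. u x *\<^sub>R x) = x"
      using hull by auto
    define \<mu> where "\<mu> i = (if i \<in> I then u (v i) else 0)" for i
    have z: "\<forall>i\<in>{0..N}-I. \<mu> i = 0" by (simp add: \<mu>_def)
    have s1: "sum \<mu> {0..N} = sum \<mu> I"
      by (rule sum.mono_neutral_right) (use I z in auto)
    have s2: "(\<Sum>i=0..N. \<mu> i *\<^sub>R v i) = (\<Sum>i\<in>I. \<mu> i *\<^sub>R v i)"
      by (rule sum.mono_neutral_right) (use I z in auto)
    have "sum \<mu> I = sum u (v ` I)" by (simp add: sum.reindex[OF inj] \<mu>_def)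
    moreover have "(\<Sum>i\<in>I. \<mu> i *\<^sub>R v i) = (\<Sum>x\<in>v ` I. u x *\<^sub>R x)"
      by (simp add: sum.reindex[OF inj] \<mu>_def)
    ultimately have "rep \<mu> x" using u s1 s2 by (auto simp: rep_def \<mu>_def)
    then show "\<exists>\<mu>. rep \<mu> x \<and> (\<forall>i\<in>{0..N}-I. \<mu> i = 0)" using z by blast
  next
    assume "\<exists>\<mu>. rep \<mu> x \<and> (\<forall>i\<in>{0..N}-I. \<mu> i = 0)"
    then obtain \<mu> where r: "rep \<mu> x" and z: "\<forall>i\<in>{0..N}-I. \<mu> i = 0" by blast
    define u where "u y = \<mu> (inv_into I v y)" for y
    have uv: "u (v i) = \<mu> i" if "i \<in> I" for i using inv_into_f_f[OF inj that] by (simp add: u_def)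
    have s1: "sum \<mu> {0..N} = sum \<mu> I"
      by (rule sum.mono_neutral_right) (use I z in auto)
    have s2: "(\<Sum>i=0..N. \<mu> i *\<^sub>R v i) = (\<Sum>i\<in>I. \<mu> i *\<^sub>R v i)"
      by (rule sum.mono_neutral_right) (use I z in auto)
    have "sum u (v ` I) = sum \<mu> I" by (simp add: sum.reindex[OF inj] uv)
    moreover have "(\<Sum>x\<in>v ` I. u x *\<^sub>R x) = (\<Sum>i\<in>I. \<mu> i *\<^sub>R v i)"
      by (simp add: sum.reindex[OF inj] uv)
    moreover have "\<forall>x\<in>v ` I. 0 \<le> u x" using r I uv by (auto simp: rep_def)
    ultimately show "x \<in> convex hull (v ` I)" using r s1 s2 hull by (auto simp: rep_def)
  qed
qed

definition S :: "nat \<Rightarrow> (real^'n) set" where "S j = convex hull (v ` ({0..N} - {j}))"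

lemma mem_S: "j \<le> N \<Longrightarrow> x \<in> S j \<longleftrightarrow> (\<exists>\<mu>. rep \<mu> x \<and> \<mu> j = 0)"
proof -
  assume j: "j \<le> N"
  have "{0..N} - ({0..N} - {j}) = {j}" using j by auto
  then show ?thesis unfolding S_def using hull_rep[of "{0..N} - {j}" x] by auto
qed

lemma rep_delta: "i \<le> N \<Longrightarrow> rep (delta i) (v i)"
  by (auto simp: rep_def delta_sum delta_comb) (simp add: delta_def)

lemma rep_kernel:
  assumes "rep \<mu> x" "rep \<nu> x"
  shows "\<exists>c. (\<forall>i\<in>{1..N}. \<nu> i = \<mu> i + c * lam i) \<and> \<nu> 0 = \<mu> 0"
  using kernel2 assms by (auto simp: rep_def)

lemma v_notin_S:
  assumes j: "j \<in> {1..N}"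
  shows "v j \<notin> S j"
proof
  assume "v j \<in> S j"
  then obtain \<mu> where r: "rep \<mu> (v j)" and z: "\<mu> j = 0" using mem_S j by auto
  obtain c where c: "\<forall>i\<in>{1..N}. \<mu> i = delta j i + c * lam i"
    using rep_kernel[OF rep_delta r] j by auto
  have "c * lam j = -1" using c j z by (auto simp: delta_def)
  obtain m where m: "m \<in> {1..N}" "m \<noteq> j" "lam m = lam j" using other_same[OF j] by blast
  have "\<mu> m = -1" using c m \<open>c * lam j = -1\<close> by (auto simp: delta_def)
  moreover have "\<mu> m \<ge> 0" using r m by (auto simp: rep_def)
  ultimately show False by simp
qed

lemma v_in_S: "i \<le> N \<Longrightarrow> i \<noteq> j \<Longrightarrow> v i \<in> S j"
  unfolding S_def by (rule hull_inc) auto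

lemma indep_S:
  assumes j: "j \<in> {1..N}"
  shows "\<not> affine_dependent (v ` ({0..N} - {j}))"
proof
  let ?I = "{0..N} - {j}"
  have inj: "inj_on v ?I" using v_inj inj_on_subset by blast
  assume "affine_dependent (v ` ?I)"
  then obtain d where d: "sum d ?I = 0" "\<exists>i\<in>?I. d i \<noteq> 0" "(\<Sum>i\<in>?I. d i *\<^sub>R v i) = 0"
    using affdep_image[OF _ inj] by auto
  define e where "e i = (if i \<in> ?I then d i else 0)" for i
  have "sum e {0..N} = sum e ?I" by (rule sum.mono_neutral_right) (auto simp: e_def)
  then have se: "sum e {0..N} = 0" using d(1) by (simp add: e_def)
  have "(\<Sum>i=0..N. e i *\<^sub>R v i) = (\<Sum>i\<in>?I. e i *\<^sub>R v i)" by (rule sum.mono_neutral_right) (auto simp: e_def)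
  then have ce: "(\<Sum>i=0..N. e i *\<^sub>R v i) = 0" using d(3) by (simp add: e_def)
  obtain c where c: "\<forall>i\<in>{1..N}. e i = 0 + c * lam i" "e 0 = 0"
    using kernel2[of "\<lambda>_. 0" e] se ce by auto
  have "e j = 0" by (simp add: e_def)
  moreover have "e j = 0 + c * lam j" using c(1) j by blast
  ultimately have "c * lam j = 0" by simp
  then have "c = 0" using lam_pm[OF j] by auto
  have "\<forall>i\<in>{0..N}. e i = 0"
  proof
    fix i assume i: "i \<in> {0..N}"
    show "e i = 0"
    proof (cases "i = 0")
      case True then show ?thesis using c(2) by simp
    next
      case False
      then have "i \<in> {1..N}" using i by auto
      then have "e i = 0 + c * lam i" using c(1) by blast
      then show ?thesis using \<open>c = 0\<close> by simp
    qed
  qed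
  moreover obtain i where "i \<in> ?I" "d i \<noteq> 0" using d(2) by blast
  moreover have "e i = d i" using \<open>i \<in> ?I\<close> by (simp add: e_def)
  ultimately show False by auto
qed

lemma dep_0: "affine_dependent (v ` ({0..N} - {0}))"
proof -
  have I: "{0..N} - {0} = {1..N}" by auto
  have inj: "inj_on v {1..N}" using v_inj inj_on_subset by (metis I Diff_subset)
  have "(\<Sum>i=0..N. lz i *\<^sub>R v i) = lz 0 *\<^sub>R v 0 + (\<Sum>i=1..N. lz i *\<^sub>R v i)"
    by (simp add: sum.atLeast_Suc_atMost)
  also have "(\<Sum>i=1..N. lz i *\<^sub>R v i) = (\<Sum>i=1..N. lam i *\<^sub>R v i)"
    by (rule sum.cong) (auto simp: lz_def)
  finally have "(\<Sum>i=1..N. lam i *\<^sub>R v i) = 0" using dep by (simp add: lz_def)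
  moreover have "lam 1 \<noteq> 0" using lam_pm[of 1] N4 by auto
  ultimately show ?thesis unfolding I affdep_image[OF finite_atLeastAtMost inj]
    using sum_lam N4 by (intro exI[of _ lam]) auto
qed

lemma card_vI: "I \<subseteq> {0..N} \<Longrightarrow> card (v ` I) = card I"
  by (meson card_image inj_on_subset v_inj)

lemma affdim_V: "aff_dim (convex hull (v ` {0..N})) = int N - 1"
proof -
  have "aff_dim (convex hull (v ` {0..N})) = aff_dim (v ` {0..N})" by (rule aff_dim_convex_hull)
  moreover have "aff_dim (v ` {0..N}) \<le> int N - 1"
    using aff_dim_le_DIM[of "v ` {0..N}"] cardn by simp
  moreover have "aff_dim (v ` ({0..N} - {1})) \<le> aff_dim (v ` {0..N})"
    by (rule aff_dim_subset) auto
  moreover have "of_nat (card (v ` ({0..N} - {1}))) = aff_dim (v ` ({0..N} - {1})) + 1"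
    using aff_dim_affine_independent indep_S[of 1] N4 by auto
  moreover have "card (v ` ({0..N} - {1})) = N" using card_vI[of "{0..N} - {1}"] N4 by auto
  ultimately show ?thesis by linarith
qed

lemma simplex_cases:
  assumes B: "B \<subseteq> v ` {0..N}" "\<not> affine_dependent B" "card B = N"
  shows "\<exists>j\<in>{1..N}. B = v ` ({0..N} - {j})"
proof -
  define J where "J = {i\<in>{0..N}. v i \<in> B}"
  have BJ: "B = v ` J" using B(1) by (auto simp: J_def)
  have Jsub: "J \<subseteq> {0..N}" by (auto simp: J_def)
  have "card J = N" using card_vI[OF Jsub] BJ B(3) by simp
  then have "J \<noteq> {0..N}"
  proof -
    assume cJ: "card J = N"
    show "J \<noteq> {0..N}"
    proof
      assume "J = {0..N}"
      then have "card J = Suc N" by simp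
      with cJ show False by simp
    qed
  qed
  then obtain j where j: "j \<in> {0..N}" "j \<notin> J" using Jsub by blast
  have sub: "J \<subseteq> {0..N} - {j}" using j by (auto simp: J_def)
  have "card ({0..N} - {j}) = N" using j by simp
  then have "J = {0..N} - {j}" using card_subset_eq[OF _ sub] \<open>card J = N\<close> by simp
  moreover have "j \<noteq> 0" using dep_0 B(2) BJ calculation by auto
  ultimately show ?thesis using BJ j by auto
qed

lemma inter_same:
  assumes j: "j \<in> {1..N}" and k: "k \<in> {1..N}" and l: "lam j = lam k"
  shows "S j \<inter> S k = convex hull (v ` ({0..N} - {j, k}))"
proof (rule equalityI)
  show "S j \<inter> S k \<subseteq> convex hull (v ` ({0..N} - {j, k}))"
  proof
    fix x assume "x \<in> S j \<inter> S k"
    then obtain \<mu> \<nu> where m: "rep \<mu> x" "\<mu> j = 0" and n: "rep \<nu> x" "\<nu> k = 0"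
      using mem_S j k by auto
    obtain c where c: "\<forall>i\<in>{1..N}. \<nu> i = \<mu> i + c * lam i" using rep_kernel[OF m(1) n(1)] by auto
    have "\<nu> j \<ge> 0" "\<mu> k \<ge> 0" using m n j k by (auto simp: rep_def)
    moreover have "\<nu> j = \<mu> j + c * lam j" using c j by blast
    moreover have "\<nu> k = \<mu> k + c * lam k" using c k by blast
    ultimately have "c * lam j \<ge> 0" "c * lam k \<le> 0" using m(2) n(2) by linarith+
    then have "c * lam j = 0" using l by simp
    then have "c = 0" using lam_pm[OF j] by auto
    moreover have "\<nu> k = \<mu> k + c * lam k" using c k by blast
    ultimately have "\<mu> k = 0" using n(2) by simp
    then show "x \<in> convex hull (v ` ({0..N} - {j, k}))"
      using hull_rep[of "{0..N} - {j, k}" x] m by auto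
  qed
next
  show "convex hull (v ` ({0..N} - {j, k})) \<subseteq> S j \<inter> S k"
    unfolding S_def by (intro Int_greatest hull_mono image_mono) auto
qed

lemma face_same:
  assumes j: "j \<in> {1..N}" and k: "k \<in> {1..N}" and l: "lam j = lam k"
  shows "(S j \<inter> S k) face_of S j"
proof -
  have fj: "S j = convex hull (v ` ({0..N} - {j}))" by (simp add: S_def)
  have sub: "v ` ({0..N} - {j, k}) \<subseteq> v ` ({0..N} - {j})" by auto
  have e: "S j \<inter> S k = convex hull (v ` ({0..N} - {j, k}))" by (rule inter_same[OF assms])
  have h: "convex hull (v ` ({0..N} - {j, k})) face_of convex hull (v ` ({0..N} - {j}))"
    unfolding face_of_convex_hull_affine_independent[OF indep_S[OF j]]
    by (intro exI[of _ "v ` ({0..N} - {j, k})"] conjI sub refl)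
  then have h2: "convex hull (v ` ({0..N} - {j, k})) face_of S j" by (simp only: fj)
  show ?thesis by (subst e) (rule h2)
qed

lemma not_face_opp:
  assumes j: "j \<in> {1..N}" and k: "k \<in> {1..N}" and l: "lam k = - lam j"
  shows "\<not> (S j \<inter> S k) face_of S j"
proof
  assume "(S j \<inter> S k) face_of S j"
  then obtain C where C: "C \<subseteq> v ` ({0..N} - {j})" "S j \<inter> S k = convex hull C"
    unfolding S_def face_of_convex_hull_affine_independent[OF indep_S[OF j]] by auto
  have "C \<subseteq> v ` ({0..N} - {j, k})"
  proof
    fix y assume y: "y \<in> C"
    then obtain i where i: "i \<in> {0..N} - {j}" "y = v i" using C(1) by blast
    have "y \<in> convex hull C" using y by (rule hull_inc)
    then have "y \<in> S j \<inter> S k" using C(2) by simp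
    then have "y \<in> S k" by simp
    then have "i \<noteq> k" using v_notin_S[OF k] i by auto
    then show "y \<in> v ` ({0..N} - {j, k})" using i by auto
  qed
  then have sub: "S j \<inter> S k \<subseteq> convex hull (v ` ({0..N} - {j, k}))"
    using C(2) hull_mono[of C "v ` ({0..N} - {j, k})"] by simp
  define a where "a = 2 / real N"
  have apos: "a > 0" using N4 by (simp add: a_def)
  define \<mu> where "\<mu> i = (if i \<in> {1..N} \<and> lam i = lam k then a else 0)" for i
  define p where "p = (\<Sum>i=0..N. \<mu> i *\<^sub>R v i)"
  have ljk: "lam j \<noteq> lam k" using l lam_pm[OF j] by auto
  have "sum \<mu> {0..N} = sum \<mu> {i\<in>{1..N}. lam i = lam k}"
    by (rule sum.mono_neutral_right) (auto simp: \<mu>_def)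
  also have "\<dots> = (\<Sum>i\<in>{i\<in>{1..N}. lam i = lam k}. a)"
    by (rule sum.cong) (auto simp: \<mu>_def)
  also have "\<dots> = real (N div 2) * a" using class_card lam_pm[OF k] by simp
  also have "\<dots> = 1" using evenN N4 by (auto simp: a_def elim!: evenE)
  finally have s\<mu>: "sum \<mu> {0..N} = 1" .
  have r\<mu>: "rep \<mu> p" using s\<mu> apos by (auto simp: rep_def p_def \<mu>_def)
  have "\<mu> j = 0" using ljk by (simp add: \<mu>_def)
  then have "p \<in> S j" using r\<mu> mem_S[of j p] j by auto
  define c where "c = - a * lam k"
  define \<nu> where "\<nu> i = \<mu> i + c * lz i" for i
  have "sum \<nu> {0..N} = sum \<mu> {0..N} + c * sum lz {0..N}"
    by (simp add: \<nu>_def sum.distrib sum_distrib_left)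
  then have s\<nu>: "sum \<nu> {0..N} = 1" using s\<mu> sum_lz by simp
  have "(\<Sum>i=0..N. \<nu> i *\<^sub>R v i) = p + c *\<^sub>R (\<Sum>i=0..N. lz i *\<^sub>R v i)"
    by (simp add: \<nu>_def p_def scaleR_add_left sum.distrib scaleR_sum_right)
  then have c\<nu>: "(\<Sum>i=0..N. \<nu> i *\<^sub>R v i) = p" using dep by simp
  have "\<nu> i \<ge> 0 \<and> (i = k \<longrightarrow> \<nu> i = 0)" if "i \<in> {0..N}" for i
  proof (cases "i = 0")
    case True then show ?thesis using k by (simp add: \<nu>_def \<mu>_def lz_def)
  next
    case False
    then have i: "i \<in> {1..N}" using that by auto
    have lk: "lam k * lam k = 1" using lam_sq[OF k] .
    show ?thesis
    proof (cases "lam i = lam k")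
      case True
      have "\<nu> i = a - a * (lam k * lam k)" using True i False by (simp add: \<nu>_def \<mu>_def lz_def c_def)
      then show ?thesis using lk by auto
    next
      case F: False
      then have "lam i = - lam k" using lam_pm[OF i] lam_pm[OF k] by auto
      then have "\<nu> i = a * (lam k * lam k)" using i False F by (simp add: \<nu>_def \<mu>_def lz_def c_def)
      then show ?thesis using lk apos F by auto
    qed
  qed
  then have "rep \<nu> p" "\<nu> k = 0" using s\<nu> c\<nu> k by (auto simp: rep_def)
  then have "p \<in> S k" using mem_S k by auto
  then have "p \<in> convex hull (v ` ({0..N} - {j, k}))" using sub \<open>p \<in> S j\<close> by auto
  then obtain \<rho> where r: "rep \<rho> p" "\<forall>i\<in>{0..N} - ({0..N} - {j, k}). \<rho> i = 0"
    using hull_rep[of "{0..N} - {j, k}" p] by auto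
  have "\<rho> j = 0" "\<rho> k = 0" using r(2) j k by auto
  obtain c' where c': "\<forall>i\<in>{1..N}. \<rho> i = \<mu> i + c' * lam i" using rep_kernel[OF r\<mu> r(1)] by auto
  have "c' * lam j = 0" using c' j \<open>\<rho> j = 0\<close> ljk by (auto simp: \<mu>_def)
  then have "c' = 0" using lam_pm[OF j] by auto
  then show False using c' k \<open>\<rho> k = 0\<close> apos by (auto simp: \<mu>_def)
qed

definition Tc :: "real \<Rightarrow> (real^'n) set set" where
  "Tc s = {S i | i. i \<in> {1..N} \<and> lam i = s}"

lemma Tc_image: "Tc s = S ` {i\<in>{1..N}. lam i = s}"
  unfolding Tc_def by blast

lemma S_sub: "S j \<subseteq> convex hull (v ` {0..N})"
  unfolding S_def by (intro hull_mono image_mono) auto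

lemma cover:
  assumes s: "s = 1 \<or> s = -1" and x: "x \<in> convex hull (v ` {0..N})"
  shows "\<exists>k\<in>{1..N}. lam k = s \<and> x \<in> S k"
proof -
  obtain \<mu> where r: "rep \<mu> x" using hull_rep[of "{0..N}" x] x by auto
  define C where "C = {i\<in>{1..N}. lam i = s}"
  have "card C = N div 2" using class_card[OF s] by (simp add: C_def)
  then have Cne: "C \<noteq> {}" using N4 by auto
  have Cfin: "finite C" by (simp add: C_def)
  define m where "m = Min (\<mu> ` C)"
  have "m \<in> \<mu> ` C" unfolding m_def using Cne Cfin by (intro Min_in) auto
  then obtain k where k: "k \<in> C" "\<mu> k = m" by blast
  have mle: "m \<le> \<mu> i" if "i \<in> C" for i unfolding m_def using Cfin that by (intro Min_le) auto
  have kr: "k \<in> {1..N}" "lam k = s" using k(1) by (auto simp: C_def)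
  have m0: "m \<ge> 0" using r kr k(2) by (auto simp: rep_def)
  have ss: "s * s = 1" using s by auto
  define \<nu> where "\<nu> i = \<mu> i - (m * s) * lz i" for i
  have "sum \<nu> {0..N} = sum \<mu> {0..N} - (m * s) * sum lz {0..N}"
    by (simp add: \<nu>_def sum_subtractf sum_distrib_left)
  then have s1: "sum \<nu> {0..N} = 1" using r sum_lz by (simp add: rep_def)
  have "(\<Sum>i=0..N. \<nu> i *\<^sub>R v i) = (\<Sum>i=0..N. \<mu> i *\<^sub>R v i - (m * s) *\<^sub>R (lz i *\<^sub>R v i))"
    by (rule sum.cong) (auto simp: \<nu>_def scaleR_diff_left)
  also have "\<dots> = (\<Sum>i=0..N. \<mu> i *\<^sub>R v i) - (m * s) *\<^sub>R (\<Sum>i=0..N. lz i *\<^sub>R v i)"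
    by (simp add: sum_subtractf scaleR_sum_right)
  finally have s2: "(\<Sum>i=0..N. \<nu> i *\<^sub>R v i) = x" using r dep by (simp add: rep_def)
  have nn: "0 \<le> \<nu> i" if i: "i \<in> {0..N}" for i
  proof (cases "i = 0")
    case True then show ?thesis using r by (simp add: \<nu>_def lz_def rep_def)
  next
    case False
    then have i1: "i \<in> {1..N}" using i by auto
    have mi: "0 \<le> \<mu> i" using r i by (simp add: rep_def)
    show ?thesis
    proof (cases "lam i = s")
      case True
      then have "i \<in> C" using i1 by (simp add: C_def)
      then have "m \<le> \<mu> i" by (rule mle)
      moreover have "\<nu> i = \<mu> i - m * (s * s)" using True False by (simp add: \<nu>_def lz_def)
      ultimately show ?thesis using ss by simp
    next
      case F: False
      then have "lam i = - s" using lam_pm[OF i1] s by auto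
      then have "\<nu> i = \<mu> i + m * (s * s)" using False by (simp add: \<nu>_def lz_def)
      then have "\<nu> i = \<mu> i + m" using ss by simp
      then show ?thesis using mi m0 by simp
    qed
  qed
  have "\<nu> k = \<mu> k - m * (s * s)" using kr by (simp add: \<nu>_def lz_def)
  then have "\<nu> k = 0" using k(2) ss by simp
  moreover have "rep \<nu> x" using s1 s2 nn by (simp add: rep_def)
  ultimately have "x \<in> S k" using mem_S[of k x] kr by auto
  then show ?thesis using kr by blast
qed

lemma card_S_vert: "j \<in> {1..N} \<Longrightarrow> card (v ` ({0..N} - {j})) = N"
  by (subst card_vI) auto

lemma trig_cls:
  assumes s: "s = 1 \<or> s = -1"
  shows "triangulation (v ` {0..N}) (Tc s)"
  unfolding triangulation_def
proof (intro conjI ballI)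
  show "finite (Tc s)" unfolding Tc_image by simp
next
  fix X assume "X \<in> Tc s"
  then obtain i where i: "i \<in> {1..N}" "X = S i" unfolding Tc_def by blast
  show "\<exists>B. B \<subseteq> v ` {0..N} \<and> \<not> affine_dependent B \<and>
          int (card B) = aff_dim (convex hull v ` {0..N}) + 1 \<and> X = convex hull B"
    apply (rule exI[of _ "v ` ({0..N} - {i})"])
    using i indep_S[OF i(1)] card_S_vert[OF i(1)] affdim_V by (auto simp: S_def)
next
  show "\<Union> (Tc s) = convex hull (v ` {0..N})"
  proof (rule equalityI)
    show "\<Union> (Tc s) \<subseteq> convex hull (v ` {0..N})" unfolding Tc_def using S_sub by blast
    show "convex hull (v ` {0..N}) \<subseteq> \<Union> (Tc s)"
    proof
      fix x assume "x \<in> convex hull (v ` {0..N})"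
      then obtain k where "k \<in> {1..N}" "lam k = s" "x \<in> S k" using cover[OF s] by blast
      then show "x \<in> \<Union> (Tc s)" unfolding Tc_def by blast
    qed
  qed
next
  fix X Y assume X: "X \<in> Tc s" and Y: "Y \<in> Tc s"
  then obtain j k where jk: "j \<in> {1..N}" "lam j = s" "X = S j" "k \<in> {1..N}" "lam k = s" "Y = S k"
    unfolding Tc_def by blast
  show "(X \<inter> Y) face_of X" using face_same[of j k] jk by simp
next
  fix X Y assume X: "X \<in> Tc s" and Y: "Y \<in> Tc s"
  then obtain j k where jk: "j \<in> {1..N}" "lam j = s" "X = S j" "k \<in> {1..N}" "lam k = s" "Y = S k"
    unfolding Tc_def by blast
  have "(S k \<inter> S j) face_of S k" using face_same[of k j] jk by simp
  then show "(X \<inter> Y) face_of Y" using jk by (simp add: Int_commute)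
qed

lemma trig_only:
  assumes T: "triangulation (v ` {0..N}) T"
  shows "T = Tc 1 \<or> T = Tc (-1)"
proof -
  have cells: "\<forall>X\<in>T. \<exists>B. B \<subseteq> v ` {0..N} \<and> \<not> affine_dependent B \<and>
                 int (card B) = aff_dim (convex hull (v ` {0..N})) + 1 \<and> X = convex hull B"
    using T[unfolded triangulation_def, THEN conjunct2, THEN conjunct1] .
  have un: "\<Union>T = convex hull (v ` {0..N})"
    using T[unfolded triangulation_def, THEN conjunct2, THEN conjunct2, THEN conjunct1] .
  have fc: "\<forall>X\<in>T. \<forall>Y\<in>T. (X \<inter> Y) face_of X \<and> (X \<inter> Y) face_of Y"
    using T[unfolded triangulation_def, THEN conjunct2, THEN conjunct2, THEN conjunct2] .
  have TS: "\<exists>j\<in>{1..N}. X = S j" if "X \<in> T" for X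
  proof -
    have "\<exists>B. B \<subseteq> v ` {0..N} \<and> \<not> affine_dependent B \<and>
                 int (card B) = aff_dim (convex hull (v ` {0..N})) + 1 \<and> X = convex hull B"
      using cells that by (rule bspec)
    then obtain B where B1: "B \<subseteq> v ` {0..N}" and B2: "\<not> affine_dependent B"
      and B3: "int (card B) = aff_dim (convex hull (v ` {0..N})) + 1" and B4: "X = convex hull B"
      by blast
    have "card B = N" using B3 affdim_V by simp
    then obtain j where j: "j \<in> {1..N}" "B = v ` ({0..N} - {j})" using simplex_cases[OF B1 B2] by blast
    have "X = S j" unfolding B4 j(2) S_def ..
    then show ?thesis using j(1) by blast
  qed
  have "v 0 \<in> convex hull (v ` {0..N})" by (rule hull_inc) auto
  then have "T \<noteq> {}" using un by auto
  then obtain X0 where "X0 \<in> T" by blast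
  then obtain j0 where j0: "j0 \<in> {1..N}" "S j0 \<in> T" using TS by blast
  define s where "s = lam j0"
  have s: "s = 1 \<or> s = -1" using lam_pm[OF j0(1)] by (simp add: s_def)
  have c1: "\<exists>k\<in>{1..N}. X = S k \<and> lam k = s" if XT: "X \<in> T" for X
  proof -
    obtain k where k: "k \<in> {1..N}" "X = S k" using TS[OF XT] by blast
    have "lam k = s"
    proof (rule ccontr)
      assume "lam k \<noteq> s"
      then have "lam k = - lam j0" using lam_pm[OF k(1)] lam_pm[OF j0(1)] by (auto simp: s_def)
      then have "\<not> (S j0 \<inter> S k) face_of S j0" using not_face_opp j0(1) k(1) by blast
      moreover have "(S j0 \<inter> S k) face_of S j0" using fc j0(2) XT k(2) by blast
      ultimately show False by blast
    qed
    then show ?thesis using k by blast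
  qed
  have c2: "S k \<in> T" if k: "k \<in> {1..N}" "lam k = s" for k
  proof (rule ccontr)
    assume nk: "S k \<notin> T"
    define \<mu> where "\<mu> i = (if i \<in> {0..N} - {k} then 1 / real N else 0)" for i
    define x where "x = (\<Sum>i=0..N. \<mu> i *\<^sub>R v i)"
    have "sum \<mu> {0..N} = (\<Sum>i\<in>{0..N} - {k}. 1 / real N)"
      unfolding \<mu>_def by (rule sum.mono_neutral_cong_right) auto
    also have "\<dots> = 1" using k N4 by simp
    finally have r: "rep \<mu> x" by (auto simp: rep_def x_def \<mu>_def)
    have "\<mu> k = 0" by (simp add: \<mu>_def)
    then have "x \<in> S k" using mem_S[of k x] k r by auto
    then have "x \<in> \<Union>T" using un S_sub by blast
    then obtain X where "X \<in> T" "x \<in> X" by blast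
    then obtain m where m: "m \<in> {1..N}" "X = S m" "lam m = s" using c1 by blast
    have "m \<noteq> k" using nk m \<open>X \<in> T\<close> by auto
    obtain \<nu> where rn: "rep \<nu> x" "\<nu> m = 0" using mem_S[of m x] m \<open>x \<in> X\<close> by auto
    obtain c where c: "\<forall>i\<in>{1..N}. \<nu> i = \<mu> i + c * lam i" using rep_kernel[OF r rn(1)] by blast
    have "\<nu> m = \<mu> m + c * lam m" using c m(1) by blast
    moreover have "\<mu> m = 1 / real N" using m(1) \<open>m \<noteq> k\<close> by (simp add: \<mu>_def)
    ultimately have cm: "c * lam m = - 1 / real N" using rn(2) by simp
    have "\<nu> k = \<mu> k + c * lam k" using c k(1) by blast
    then have "\<nu> k = - 1 / real N" using cm \<open>\<mu> k = 0\<close> k(2) m(3) by simp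
    moreover have "\<nu> k \<ge> 0" using rn(1) k(1) by (simp add: rep_def)
    ultimately show False using N4 by (simp add: divide_less_0_iff)
  qed
  have "T = Tc s"
  proof (rule equalityI)
    show "T \<subseteq> Tc s" using c1 unfolding Tc_def by blast
    show "Tc s \<subseteq> T" using c2 unfolding Tc_def by blast
  qed
  then show ?thesis using s by auto
qed

definition hh :: "real \<Rightarrow> nat \<Rightarrow> real" where "hh t i = (if i = 1 then t else 0)"
definition lift :: "real \<Rightarrow> nat \<Rightarrow> (real^'n) \<times> real" where "lift t i = (v i, hh t i)"

lemma lift_inj: "inj_on (lift t) {0..N}"
  using v_inj unfolding inj_on_def lift_def by auto

lemma lift_image_fst: "fst ` (lift t ` I) = v ` I"
  by (force simp: lift_def image_image)

lemma lift_indep: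
  assumes t: "t \<noteq> 0"
  shows "\<not> affine_dependent (lift t ` {0..N})"
proof
  assume "affine_dependent (lift t ` {0..N})"
  then obtain d where d: "sum d {0..N} = 0" "\<exists>i\<in>{0..N}. d i \<noteq> 0" "(\<Sum>i=0..N. d i *\<^sub>R lift t i) = 0"
    using affdep_image[OF finite_atLeastAtMost lift_inj] by blast
  have "fst (\<Sum>i=0..N. d i *\<^sub>R lift t i) = 0" using d(3) by simp
  then have f: "(\<Sum>i=0..N. d i *\<^sub>R v i) = 0" by (simp add: fst_sum lift_def)
  have "snd (\<Sum>i=0..N. d i *\<^sub>R lift t i) = 0" using d(3) by simp
  then have "(\<Sum>i=0..N. d i * hh t i) = 0" by (simp add: snd_sum lift_def)
  moreover have "(\<Sum>i=0..N. d i * hh t i) = d 1 * t"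
  proof -
    have eq: "(\<lambda>i. d i * hh t i) = (\<lambda>i. if i = 1 then d 1 * t else 0)" by (auto simp: hh_def fun_eq_iff)
    show ?thesis unfolding eq using N4 by simp
  qed
  ultimately have d1: "d 1 = 0" using t by simp
  have di: "d i = 0" if "i \<in> {1..N}" for i
  proof -
    have "lam i * d i = lam 1 * d 1" using kernel[OF f that] .
    then have "lam i * d i = 0" using d1 by simp
    then show ?thesis using lam_pm[OF that] by auto
  qed
  have "sum d {0..N} = d 0 + sum d {1..N}" by (simp add: sum.atLeast_Suc_atMost)
  moreover have "sum d {1..N} = 0" using di by simp
  ultimately have "d 0 = 0" using d(1) by simp
  have "\<forall>i\<in>{0..N}. d i = 0"
  proof
    fix i assume i: "i \<in> {0..N}"
    show "d i = 0"
    proof (cases "i = 0")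
      case True then show ?thesis using \<open>d 0 = 0\<close> by simp
    next
      case False then show ?thesis using i di by simp
    qed
  qed
  then show False using d(2) by blast
qed

lemma affdim_P:
  assumes t: "t \<noteq> 0"
  shows "aff_dim (convex hull (lift t ` {0..N})) = int N"
proof -
  have "of_nat (card (lift t ` {0..N})) = aff_dim (lift t ` {0..N}) + 1"
    using aff_dim_affine_independent[OF lift_indep[OF t]] .
  moreover have "card (lift t ` {0..N}) = Suc N" using card_image[OF lift_inj] by simp
  ultimately show ?thesis by (simp add: aff_dim_convex_hull)
qed

lemma affdim_facet:
  assumes t: "t \<noteq> 0" and j: "j \<in> {0..N}"
  shows "aff_dim (convex hull (lift t ` ({0..N} - {j}))) = int N - 1"
proof -
  have ind: "\<not> affine_dependent (lift t ` ({0..N} - {j}))"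
    using affine_independent_subset[OF lift_indep[OF t]] by (meson Diff_subset image_mono)
  have "of_nat (card (lift t ` ({0..N} - {j}))) = aff_dim (lift t ` ({0..N} - {j})) + 1"
    using aff_dim_affine_independent[OF ind] .
  moreover have "card (lift t ` ({0..N} - {j})) = N"
    using card_image[OF inj_on_subset[OF lift_inj, of "{0..N} - {j}"]] j by auto
  ultimately show ?thesis by (simp add: aff_dim_convex_hull)
qed

lemma fst_hull_lift: "fst ` (convex hull (lift t ` I)) = convex hull (v ` I)"
  by (simp only: convex_hull_linear_image[OF linear_fst] lift_image_fst)

lemma inner_axis_ebasis:
  assumes k: "k \<in> {1..N-1}"
  shows "inner (axis (idx k) (1::real)) (ebasis idx (N-1) m) = (if m = k then 1 else 0)"
proof (cases "1 \<le> m \<and> m \<le> N - 1")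
  case True
  then have "idx k = idx m \<longleftrightarrow> m = k"
    using inj_idx k by (auto dest: inj_onD)
  then show ?thesis using True by (auto simp: ebasis_def inner_axis_axis)
next
  case False
  then show ?thesis using k by (auto simp: ebasis_def)
qed

definition avec :: "real \<Rightarrow> nat \<Rightarrow> real^'n" where
  "avec \<sigma> j = \<sigma> *\<^sub>R (\<Sum>k\<in>{1..<j}. axis (idx k) 1)"

lemma inner_avec_ebasis:
  assumes j: "j \<in> {1..N}"
  shows "inner (avec \<sigma> j) (ebasis idx (N-1) m) = (if m \<in> {1..<j} then \<sigma> else 0)"
proof -
  have "inner (avec \<sigma> j) (ebasis idx (N-1) m) = \<sigma> * (\<Sum>k\<in>{1..<j}. inner (axis (idx k) 1) (ebasis idx (N-1) m))"
    by (simp add: avec_def inner_sum_left)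
  also have "(\<Sum>k\<in>{1..<j}. inner (axis (idx k) (1::real)) (ebasis idx (N-1) m)) = (\<Sum>k\<in>{1..<j}. if m = k then 1 else 0)"
    by (rule sum.cong[OF refl], rule inner_axis_ebasis) (use j in auto)
  also have "\<dots> = (if m \<in> {1..<j} then 1 else 0)" by (simp add: sum.delta)
  finally show ?thesis by simp
qed

lemma phi_val:
  assumes s: "\<sigma> = 1 \<or> \<sigma> = -1" and j: "j \<in> {1..N}" and lj: "lam j = \<sigma>" and i: "i \<in> {0..N}"
  shows "inner (avec \<sigma> j) (v i) + hh (\<sigma> * lam 1) i = (if i = j then 1 else 0)"
proof -
  have ss: "\<sigma> * \<sigma> = 1" using s by auto
  have l1: "lam 1 * lam 1 = 1" using lam_sq[of 1] N4 by auto
  have g: "inner (avec \<sigma> j) (ebasis idx (N-1) m) = (if m \<in> {1..<j} then \<sigma> else 0)" for m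
    using inner_avec_ebasis[OF j] .
  have iv: "inner (avec \<sigma> j) (v i) = (if i = 0 then 0 else lam i * (inner (avec \<sigma> j) (ebasis idx (N-1) (i-1)) - inner (avec \<sigma> j) (ebasis idx (N-1) i)))"
    by (simp add: v_def vpt_def inner_diff_right)
  show ?thesis
  proof (cases "i = 0")
    case True then show ?thesis unfolding iv using j by (simp add: hh_def)
  next
    case F0: False
    show ?thesis
    proof (cases "i = 1")
      case True
      then show ?thesis
      proof (cases "j = 1")
        case True
        then have "lam 1 = \<sigma>" using lj by simp
        then show ?thesis unfolding iv g using \<open>i = 1\<close> True ss by (simp add: hh_def)
      next
        case False
        then have "1 < j" using j by auto
        then show ?thesis unfolding iv g using \<open>i = 1\<close> False l1 by (simp add: hh_def)
      qed
    next
      case F1: False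
      then have i2: "i \<ge> 2" using F0 by auto
      have "i - 1 \<in> {1..<j} \<longleftrightarrow> i \<le> j" using i2 by auto
      moreover have "i \<in> {1..<j} \<longleftrightarrow> i < j" using i2 by auto
      ultimately have e: "inner (avec \<sigma> j) (v i) = lam i * ((if i \<le> j then \<sigma> else 0) - (if i < j then \<sigma> else 0))"
        unfolding iv g using F0 by simp
      show ?thesis
      proof (cases "i = j")
        case True then show ?thesis using e F1 lj ss by (simp add: hh_def)
      next
        case False then show ?thesis using e F1 by (auto simp: hh_def)
      qed
    qed
  qed
qed


lemma inner_lift: "inner (a, c) (lift t i) = inner a (v i) + c * hh t i"
  by (simp add: lift_def)

lemma facet_j:
  assumes s: "\<sigma> = 1 \<or> \<sigma> = -1" and j: "j \<in> {1..N}" and lj: "lam j = \<sigma>"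
  shows "lower_facet (convex hull (lift (\<sigma> * lam 1) ` {0..N}))
           {x \<in> convex hull (lift (\<sigma> * lam 1) ` {0..N}). inner (avec \<sigma> j, 1) x = 0}
         \<and> fst ` {x \<in> convex hull (lift (\<sigma> * lam 1) ` {0..N}). inner (avec \<sigma> j, 1) x = 0} = S j"
proof -
  define t where "t = \<sigma> * lam 1"
  define L where "L = lift t ` {0..N}"
  define w where "w = (avec \<sigma> j, (1::real))"
  define F where "F = {x \<in> convex hull L. inner w x = 0}"
  have t0: "t \<noteq> 0" using s lam_pm[of 1] N4 by (auto simp: t_def)
  have val: "inner w (lift t i) = (if i = j then 1 else 0)" if "i \<in> {0..N}" for i
    using phi_val[OF s j lj that] by (simp add: w_def inner_lift t_def)
  have geL: "\<forall>l\<in>L. 0 \<le> inner w l" using val by (auto simp: L_def)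
  have LF: "{l\<in>L. inner w l = 0} = lift t ` ({0..N} - {j})"
    using val j by (auto simp: L_def)
  have finL: "finite L" by (simp add: L_def)
  have Fh: "F = convex hull (lift t ` ({0..N} - {j}))"
    unfolding F_def hull_section[OF finL geL] LF ..
  have geP: "\<forall>x\<in>convex hull L. 0 \<le> inner w x" using hull_ge[OF geL] .
  have face: "F face_of convex hull L"
  proof -
    have "(convex hull L \<inter> {x. inner w x = 0}) face_of convex hull L"
      using geP by (intro face_of_Int_supporting_hyperplane_ge) auto
    moreover have "convex hull L \<inter> {x. inner w x = 0} = F" by (auto simp: F_def)
    ultimately show ?thesis by simp
  qed
  have adF: "aff_dim F = int N - 1" unfolding Fh using affdim_facet[OF t0] j by simp
  have adP: "aff_dim (convex hull L) = int N" unfolding L_def using affdim_P[OF t0] .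
  have lf: "lower_facet (convex hull L) F"
    unfolding lower_facet_def
    using face adF adP geP
    by (intro conjI exI[of _ "avec \<sigma> j"] exI[of _ "1::real"] exI[of _ "0::real"]) (auto simp: F_def w_def)
  have "fst ` F = S j" unfolding Fh fst_hull_lift S_def ..
  then show ?thesis using lf by (simp add: F_def L_def w_def t_def)
qed

lemma facet_only:
  assumes s: "\<sigma> = 1 \<or> \<sigma> = -1" and lf: "lower_facet (convex hull (lift (\<sigma> * lam 1) ` {0..N})) F"
  shows "\<exists>j\<in>{1..N}. lam j = \<sigma> \<and> fst ` F = S j"
proof -
  define t where "t = \<sigma> * lam 1"
  define L where "L = lift t ` {0..N}"
  have t0: "t \<noteq> 0" using s lam_pm[of 1] N4 by (auto simp: t_def)
  have l1: "lam 1 * lam 1 = 1" using lam_sq[of 1] N4 by auto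
  have ss: "\<sigma> * \<sigma> = 1" using s by auto
  have lf': "F face_of convex hull L \<and> aff_dim F = aff_dim (convex hull L) - 1 \<and>
     (\<exists>a c b. c > 0 \<and> (\<forall>x\<in>convex hull L. inner (a, c) x \<ge> b) \<and> F = {x\<in>convex hull L. inner (a, c) x = b})"
    using lf[unfolded lower_facet_def] unfolding L_def t_def .
  have ad: "aff_dim F = aff_dim (convex hull L) - 1" using lf' by (elim conjE)
  obtain a c b where c: "c > 0"
    and ge: "\<forall>x\<in>convex hull L. b \<le> inner (a, c) x" and Fe: "F = {x\<in>convex hull L. inner (a, c) x = b}"
    using lf'[THEN conjunct2, THEN conjunct2] by (elim exE conjE) (rule that)
  define w where "w = (a, c)"
  have geL: "\<forall>l\<in>L. b \<le> inner w l"
  proof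
    fix l assume "l \<in> L"
    then have "l \<in> convex hull L" by (rule hull_inc)
    then show "b \<le> inner w l" using ge by (simp add: w_def)
  qed
  define J where "J = {i\<in>{0..N}. inner w (lift t i) = b}"
  have Jsub: "J \<subseteq> {0..N}" by (auto simp: J_def)
  have LF: "{l\<in>L. inner w l = b} = lift t ` J" by (auto simp: J_def L_def)
  have finL: "finite L" by (simp add: L_def)
  have F2: "F = convex hull (lift t ` J)"
  proof -
    have "F = {x\<in>convex hull L. inner w x = b}" using Fe by (simp add: w_def)
    also have "\<dots> = convex hull {l\<in>L. inner w l = b}" by (rule hull_section[OF finL geL])
    also have "\<dots> = convex hull (lift t ` J)" by (simp only: LF)
    finally show ?thesis .
  qed
  have adP: "aff_dim (convex hull L) = int N" unfolding L_def using affdim_P[OF t0] .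
  have "aff_dim F = aff_dim (lift t ` J)" unfolding F2 by (rule aff_dim_convex_hull)
  also have "\<dots> \<le> int (card (lift t ` J)) - 1"
    using aff_dim_le_card[of "lift t ` J"] Jsub finite_subset by fastforce
  also have "card (lift t ` J) = card J"
    using card_image[OF inj_on_subset[OF lift_inj Jsub]] .
  finally have cJ: "card J \<ge> N" using ad adP by linarith
  have "J \<noteq> {0..N}"
  proof
    assume "J = {0..N}"
    then have "F = convex hull L" using F2 by (simp add: L_def)
    then show False using ad by simp
  qed
  then obtain j where j: "j \<in> {0..N}" "j \<notin> J" using Jsub by blast
  have sub: "J \<subseteq> {0..N} - {j}" using Jsub j by auto
  have cN: "card ({0..N} - {j}) = N" using j by simp
  have "card J \<le> card ({0..N} - {j})" by (rule card_mono) (simp_all add: sub)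
  then have cE: "card J = card ({0..N} - {j})" using cJ cN by simp
  have finD: "finite ({0..N} - {j})" by simp
  have Jj: "J = {0..N} - {j}" by (rule card_subset_eq[OF finD sub cE])
  define \<phi> where "\<phi> i = inner w (lift t i)" for i
  have \<phi>b: "\<phi> i = b" if "i \<in> {0..N}" "i \<noteq> j" for i
  proof -
    have "i \<in> J" unfolding Jj using that by simp
    then show ?thesis unfolding J_def \<phi>_def by simp
  qed
  have "\<phi> j \<ge> b" using geL j by (auto simp: \<phi>_def L_def)
  moreover have "\<phi> j \<noteq> b" using j unfolding \<phi>_def J_def by simp
  ultimately have \<phi>j: "\<phi> j - b > 0" by simp
  have "(\<Sum>i=0..N. lz i * \<phi> i) = (\<Sum>i=0..N. lz i * inner a (v i)) + c * (\<Sum>i=0..N. lz i * hh t i)"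
    by (simp add: \<phi>_def w_def inner_lift algebra_simps sum.distrib sum_distrib_left)
  also have "(\<Sum>i=0..N. lz i * inner a (v i)) = inner a (\<Sum>i=0..N. lz i *\<^sub>R v i)"
    by (simp add: inner_sum_right)
  also have "\<dots> = 0" using dep by simp
  also have "(\<Sum>i=0..N. lz i * hh t i) = lam 1 * t"
  proof -
    have eq: "(\<lambda>i. lz i * hh t i) = (\<lambda>i. if i = 1 then lam 1 * t else 0)"
      by (auto simp: hh_def lz_def fun_eq_iff)
    show ?thesis unfolding eq using N4 by simp
  qed
  finally have id1: "(\<Sum>i=0..N. lz i * \<phi> i) = c * \<sigma>" using l1 by (simp add: t_def algebra_simps)
  have "(\<Sum>i=0..N. lz i * \<phi> i) = (\<Sum>i=0..N. lz i * b + (if i = j then lz j * (\<phi> j - b) else 0))"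
    by (rule sum.cong) (auto simp: \<phi>b algebra_simps)
  also have "\<dots> = b * sum lz {0..N} + lz j * (\<phi> j - b)"
    using j by (simp add: sum.distrib sum_distrib_left mult.commute)
  finally have id2: "lz j * (\<phi> j - b) = c * \<sigma>" using id1 sum_lz by simp
  have "j \<noteq> 0"
  proof
    assume "j = 0"
    then have "c * \<sigma> = 0" using id2 by (simp add: lz_def)
    then show False using c s by auto
  qed
  then have j1: "j \<in> {1..N}" using j by auto
  have lj: "lam j = \<sigma>"
  proof (rule ccontr)
    assume "lam j \<noteq> \<sigma>"
    then have "lam j = - \<sigma>" using lam_pm[OF j1] s by auto
    then have "- \<sigma> * (\<phi> j - b) = c * \<sigma>" using id2 \<open>j \<noteq> 0\<close> by (simp add: lz_def)
    then show False using s c \<phi>j by auto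
  qed
  have "fst ` F = S j" unfolding F2 Jj fst_hull_lift S_def ..
  then show ?thesis using j1 lj by blast
qed

lemma reg_cls:
  assumes s: "\<sigma> = 1 \<or> \<sigma> = -1"
  shows "regular_triangulation (v ` {0..N}) (Tc \<sigma>)"
  unfolding regular_triangulation_def
proof (intro conjI exI)
  show "triangulation (v ` {0..N}) (Tc \<sigma>)" using trig_cls[OF s] .
  define t where "t = \<sigma> * lam 1"
  define h where "h x = (if x = v 1 then t else 0)" for x
  have hv: "h (v i) = hh t i" if "i \<in> {0..N}" for i
  proof -
    have "v i = v 1 \<longleftrightarrow> i = 1" using v_inj that N4 by (auto dest: inj_onD)
    then show ?thesis by (simp add: h_def hh_def)
  qed
  have LE: "(\<lambda>x. (x, h x)) ` v ` {0..N} = lift t ` {0..N}"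
    unfolding image_image using hv by (auto simp: lift_def)
  show "Tc \<sigma> = (\<lambda>F. fst ` F) ` {F. lower_facet (convex hull ((\<lambda>x. (x, h x)) ` v ` {0..N})) F}"
    unfolding LE
  proof (rule equalityI)
    show "Tc \<sigma> \<subseteq> (\<lambda>F. fst ` F) ` {F. lower_facet (convex hull (lift t ` {0..N})) F}"
    proof
      fix X assume "X \<in> Tc \<sigma>"
      then obtain j where j: "j \<in> {1..N}" "lam j = \<sigma>" "X = S j" unfolding Tc_def by blast
      show "X \<in> (\<lambda>F. fst ` F) ` {F. lower_facet (convex hull (lift t ` {0..N})) F}"
        using facet_j[OF s j(1,2)] j(3) unfolding t_def by blast
    qed
    show "(\<lambda>F. fst ` F) ` {F. lower_facet (convex hull (lift t ` {0..N})) F} \<subseteq> Tc \<sigma>"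
    proof
      fix X assume "X \<in> (\<lambda>F. fst ` F) ` {F. lower_facet (convex hull (lift t ` {0..N})) F}"
      then obtain F where F: "lower_facet (convex hull (lift t ` {0..N})) F" "X = fst ` F" by blast
      then obtain j where "j \<in> {1..N}" "lam j = \<sigma>" "fst ` F = S j"
        using facet_only[OF s] unfolding t_def by blast
      then show "X \<in> Tc \<sigma>" using F(2) unfolding Tc_def by blast
    qed
  qed
qed

end

theorem lemma5p3:
  fixes idx :: "nat \<Rightarrow> 'n::finite" and N :: nat and lam :: "nat \<Rightarrow> real"
  assumes "even N" and "N \<ge> 4" and "CARD('n) + 1 = N"
    and "bij_betw idx {1..N - 1} (UNIV :: 'n set)"
    and "lam \<in> Lambda N"
  defines "V \<equiv> vpt idx (N - 1) lam ` {0..N}"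
  defines "Tplus \<equiv> {convex hull (V - {vpt idx (N - 1) lam i}) | i. 1 \<le> i \<and> i \<le> N \<and> lam i = lam 1}"
  defines "Tminus \<equiv> {convex hull (V - {vpt idx (N - 1) lam i}) | i. 1 \<le> i \<and> i \<le> N \<and> lam i = - lam 1}"
  shows "{T. triangulation V T} = {Tplus, Tminus} \<and> Tplus \<noteq> Tminus
         \<and> regular_triangulation V Tplus \<and> regular_triangulation V Tminus"
proof -
  interpret gcfg idx N lam
    by unfold_locales (use assms(1-5) in auto)
  have vv: "vpt idx (N - 1) lam i = v i" for i by (simp add: v_def)
  have VV: "V = v ` {0..N}" unfolding V_def vv ..
  have SD: "convex hull (V - {vpt idx (N - 1) lam i}) = S i" if "i \<in> {0..N}" for i
  proof -
    have "v ` ({0..N} - {i}) = v ` {0..N} - v ` {i}"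
      by (rule inj_on_image_set_diff[OF v_inj]) (use that in auto)
    then have "V - {vpt idx (N - 1) lam i} = v ` ({0..N} - {i})" unfolding VV vv by simp
    then show ?thesis unfolding S_def by simp
  qed
  have TT: "{convex hull (V - {vpt idx (N - 1) lam i}) | i. 1 \<le> i \<and> i \<le> N \<and> lam i = s} = Tc s" for s
  proof -
    have "{convex hull (V - {vpt idx (N - 1) lam i}) | i. 1 \<le> i \<and> i \<le> N \<and> lam i = s}
        = (\<lambda>i. convex hull (V - {vpt idx (N - 1) lam i})) ` {i. 1 \<le> i \<and> i \<le> N \<and> lam i = s}"
      by (rule setcompr_eq_image)
    also have "\<dots> = S ` {i\<in>{1..N}. lam i = s}"
    proof (rule image_cong)
      show "{i. 1 \<le> i \<and> i \<le> N \<and> lam i = s} = {i\<in>{1..N}. lam i = s}" by auto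
    next
      fix i assume "i \<in> {i\<in>{1..N}. lam i = s}"
      then have "i \<in> {0..N}" by auto
      then show "convex hull (V - {vpt idx (N - 1) lam i}) = S i" by (rule SD)
    qed
    finally show ?thesis unfolding Tc_image .
  qed
  have TP: "Tplus = Tc (lam 1)" unfolding Tplus_def TT ..
  have TM: "Tminus = Tc (- lam 1)" unfolding Tminus_def TT ..
  have l1: "lam 1 = 1 \<or> lam 1 = -1" using lam_pm[of 1] N4 by auto
  have A: "{T. triangulation V T} = {Tc 1, Tc (-1)}"
  proof (rule equalityI)
    show "{T. triangulation V T} \<subseteq> {Tc 1, Tc (-1)}" using trig_only unfolding VV by blast
    show "{Tc 1, Tc (-1)} \<subseteq> {T. triangulation V T}" using trig_cls[of 1] trig_cls[of "-1"] unfolding VV by auto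
  qed
  have A2: "{Tplus, Tminus} = {Tc 1, Tc (-1)}" unfolding TP TM using l1 by auto
  have B: "Tc (lam 1) \<noteq> Tc (- lam 1)"
  proof
    assume eq: "Tc (lam 1) = Tc (- lam 1)"
    have 1: "(1::nat) \<in> {1..N}" using N4 by auto
    have "S 1 \<in> Tc (lam 1)" unfolding Tc_def using 1 by blast
    then have "S 1 \<in> Tc (- lam 1)" using eq by simp
    then obtain k where k: "k \<in> {1..N}" "lam k = - lam 1" "S 1 = S k" unfolding Tc_def by blast
    have "k \<noteq> 1" using k(2) l1 by auto
    then have "v 1 \<in> S k" using v_in_S[of 1 k] N4 by auto
    then have "v 1 \<in> S 1" using k(3) by simp
    then show False using v_notin_S[OF 1] by simp
  qed
  have C1: "regular_triangulation V Tplus" unfolding TP VV using reg_cls l1 by blast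
  have C2: "regular_triangulation V Tminus" unfolding TM VV using reg_cls l1 by auto
  show ?thesis using A A2 B C1 C2 TP TM by simp
qed

end
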